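(* Let $0\le t_d\le t_f$ be integers, let $\mathcal{C}$ be an $[n,k,\ge 2t_d+1]$ linear code over $\mathbb{F}_q$ with generator matrix $G$ and $c_u=uG$, let $f:\mathbb{F}_q^k\to\mathrm{Im}(f)$, and let $u_1,\dots,u_M\in\mathbb{F}_q^k$. Then $$N\big(\mathcal{D}_{\mathcal{C},f}(t_f:u_1,\dots,u_M)\big)\le N(M,2(t_f-t_d)).$$
   Context: $d(\cdot,\cdot)$ is Hamming distance. $\mathcal{D}_{\mathcal{C},f}(t_f:u_1,\dots,u_M)$ is the $M\times M$ matrix with $(i,j)$ entry $\max(2t_f+1-d(c_{u_i},c_{u_j}),0)$ if $f(u_i)\ne f(u_j)$ and $0$ otherwise. For a nonnegative integer $M\times M$ matrix $\mathcal{D}$, $N(\mathcal{D})$ is the least $r$ such that there are $p_1,\dots,p_M\in\mathbb{F}_q^r$ (not necessarily distinct) with $d(p_i,p_j)\ge[\mathcal{D}]_{i,j}$ for all $i,j$. $N(M,D)$ denotes $N(\mathcal{D})$ for the matrix with all off-diagonal entries equal to $D$ and zero diagonal. *)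

theory Defs
  imports Main
begin

definition vecs :: "nat \<Rightarrow> 'a list set" where
  "vecs r = {x. length x = r}"

definition hamming :: "'a list \<Rightarrow> 'a list \<Rightarrow> nat" where
  "hamming x y = card {i. i < length x \<and> i < length y \<and> x ! i \<noteq> y ! i}"

definition encode :: "nat \<Rightarrow> nat \<Rightarrow> (nat \<Rightarrow> nat \<Rightarrow> 'a::comm_ring_1) \<Rightarrow> 'a list \<Rightarrow> 'a list" where
  "encode k n G u = map (\<lambda>j. \<Sum>i<k. u ! i * G i j) [0..<n]"

definition code :: "nat \<Rightarrow> nat \<Rightarrow> (nat \<Rightarrow> nat \<Rightarrow> 'a::comm_ring_1) \<Rightarrow> 'a list set" where
  "code k n G = encode k n G ` vecs k"

definition rows_lin_indep :: "nat \<Rightarrow> nat \<Rightarrow> (nat \<Rightarrow> nat \<Rightarrow> 'a::comm_ring_1) \<Rightarrow> bool" where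
  "rows_lin_indep k n G \<longleftrightarrow>
     (\<forall>u \<in> vecs k. encode k n G u = replicate n 0 \<longrightarrow> u = replicate k 0)"

definition min_dist_ge :: "'a list set \<Rightarrow> nat \<Rightarrow> bool" where
  "min_dist_ge C d \<longleftrightarrow> (\<forall>c\<in>C. \<forall>c'\<in>C. c \<noteq> c' \<longrightarrow> d \<le> hamming c c')"

text \<open>The function-correcting distance matrix D_{C,f}(t_f : u_1..u_M), indices 0..M-1.
  Truncated nat subtraction gives max(2t_f+1-d, 0).\<close>
definition Dmat :: "nat \<Rightarrow> nat \<Rightarrow> (nat \<Rightarrow> nat \<Rightarrow> 'a::comm_ring_1) \<Rightarrow> ('a list \<Rightarrow> 'b)
    \<Rightarrow> nat \<Rightarrow> (nat \<Rightarrow> 'a list) \<Rightarrow> nat \<Rightarrow> nat \<Rightarrow> nat" where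
  "Dmat k n G f tf u i j =
     (if f (u i) \<noteq> f (u j) then (2 * tf + 1) - hamming (encode k n G (u i)) (encode k n G (u j)) else 0)"

definition Nmat :: "'a itself \<Rightarrow> nat \<Rightarrow> (nat \<Rightarrow> nat \<Rightarrow> nat) \<Rightarrow> nat" where
  "Nmat _ M D = (LEAST r. \<exists>p :: nat \<Rightarrow> 'a list.
      (\<forall>i<M. p i \<in> vecs r) \<and> (\<forall>i<M. \<forall>j<M. D i j \<le> hamming (p i) (p j)))"

definition Nunif :: "'a itself \<Rightarrow> nat \<Rightarrow> nat \<Rightarrow> nat" where
  "Nunif T M d = Nmat T M (\<lambda>i j. if i = j then 0 else d)"

end

theory Submission
  imports Defs
begin

lemma encode_inj:
  fixes G :: "nat \<Rightarrow> nat \<Rightarrow> 'a::comm_ring_1"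
  assumes li: "rows_lin_indep k n G" and x: "x \<in> vecs k" and y: "y \<in> vecs k"
    and e: "encode k n G x = encode k n G y"
  shows "x = y"
proof -
  define w where "w = map2 (-) x y"
  have lx: "length x = k" and ly: "length y = k" using x y by (auto simp: vecs_def)
  have wk: "w \<in> vecs k" using lx ly by (simp add: w_def vecs_def)
  have "encode k n G w = replicate n 0"
  proof (rule nth_equalityI)
    show "length (encode k n G w) = length (replicate n 0)" by (simp add: encode_def)
  next
    fix j assume "j < length (encode k n G w)"
    then have j: "j < n" by (simp add: encode_def)
    have "encode k n G w ! j = (\<Sum>i<k. (x ! i - y ! i) * G i j)"
      using j lx ly by (simp add: encode_def w_def)
    also have "\<dots> = (\<Sum>i<k. x ! i * G i j) - (\<Sum>i<k. y ! i * G i j)"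
      by (simp add: algebra_simps sum_subtractf)
    also have "\<dots> = encode k n G x ! j - encode k n G y ! j" using j by (simp add: encode_def)
    also have "\<dots> = 0" using e by simp
    finally show "encode k n G w ! j = replicate n 0 ! j" using j by simp
  qed
  then have "w = replicate k 0" using li wk by (simp add: rows_lin_indep_def)
  show "x = y"
  proof (rule nth_equalityI)
    show "length x = length y" using lx ly by simp
  next
    fix i assume "i < length x"
    then have "w ! i = 0" using \<open>w = replicate k 0\<close> lx by simp
    moreover have "w ! i = x ! i - y ! i" using \<open>i < length x\<close> lx ly unfolding w_def by simp
    ultimately show "x ! i = y ! i" by simp
  qed
qed

lemma Nmat_le:
  assumes "\<forall>i<M. (p :: nat \<Rightarrow> 'a list) i \<in> vecs r" "\<forall>i<M. \<forall>j<M. D i j \<le> hamming (p i) (p j)"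
  shows "Nmat TYPE('a) M D \<le> r"
  unfolding Nmat_def by (rule Least_le) (use assms in blast)

lemma exists_unif:
  "\<exists>p :: nat \<Rightarrow> 'a::field list. (\<forall>i<M. p i \<in> vecs (M*d)) \<and>
     (\<forall>i<M. \<forall>j<M. (if i = j then 0 else d) \<le> hamming (p i) (p j))"
proof -
  define p :: "nat \<Rightarrow> 'a list" where "p i = map (\<lambda>j. if j div d = i then 1 else 0) [0..<M*d]" for i
  have "(if i = j then 0 else d) \<le> hamming (p i) (p j)" if "i < M" "j < M" for i j
  proof (cases "i = j")
    case False
    have sub: "{i*d..<i*d+d} \<subseteq> {l. l < length (p i) \<and> l < length (p j) \<and> p i ! l \<noteq> p j ! l}"
    proof
      fix l assume l: "l \<in> {i*d..<i*d+d}"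
      then have dpos: "d > 0" by auto
      obtain r where lr: "l = i * d + r" and rd: "r < d" using l
        by (metis add_less_cancel_left atLeastLessThan_iff le_Suc_ex)
      have ldiv: "l div d = i" using lr rd dpos by simp
      have "Suc i * d \<le> M * d" using \<open>i < M\<close>
        by (intro mult_le_mono1) simp
      then have "i * d + d \<le> M * d" by simp
      then have "l < M*d" using l by auto
      then show "l \<in> {l. l < length (p i) \<and> l < length (p j) \<and> p i ! l \<noteq> p j ! l}"
        using ldiv False by (simp add: p_def)
    qed
    have "card {i*d..<i*d+d} \<le> hamming (p i) (p j)" unfolding hamming_def
      by (rule card_mono[OF _ sub]) auto
    then show ?thesis using False by simp
  qed simp
  moreover have "\<forall>i<M. p i \<in> vecs (M*d)" by (simp add: p_def vecs_def)
  ultimately show ?thesis by blast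
qed

theorem mainTheorem5:
  fixes G :: "nat \<Rightarrow> nat \<Rightarrow> 'a::{field,finite}"
    and f :: "'a list \<Rightarrow> 'b"
    and u :: "nat \<Rightarrow> 'a list"
    and n k td tf M :: nat
  assumes "td \<le> tf"
    and "rows_lin_indep k n G"
    and "min_dist_ge (code k n G) (2 * td + 1)"
    and "\<forall>i<M. u i \<in> vecs k"
  shows "Nmat TYPE('a) M (Dmat k n G f tf u) \<le> Nunif TYPE('a) M (2 * (tf - td))"
proof -
  let ?d = "2 * (tf - td)"
  let ?P = "\<lambda>r. \<exists>p :: nat \<Rightarrow> 'a list. (\<forall>i<M. p i \<in> vecs r) \<and>
     (\<forall>i<M. \<forall>j<M. (if i = j then 0 else ?d) \<le> hamming (p i) (p j))"
  have ex: "?P (M * ?d)" by (rule exists_unif)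
  then have "?P (LEAST r. ?P r)" by (rule LeastI)
  then obtain p :: "nat \<Rightarrow> 'a list" where p1: "\<forall>i<M. p i \<in> vecs (LEAST r. ?P r)"
    and p2: "\<forall>i<M. \<forall>j<M. (if i = j then 0 else ?d) \<le> hamming (p i) (p j)" by blast
  have "\<forall>i<M. \<forall>j<M. Dmat k n G f tf u i j \<le> hamming (p i) (p j)"
  proof (intro allI impI)
    fix i j assume i: "i < M" and j: "j < M"
    show "Dmat k n G f tf u i j \<le> hamming (p i) (p j)"
    proof (cases "f (u i) \<noteq> f (u j)")
      case True
      then have ne: "u i \<noteq> u j" and ij: "i \<noteq> j" by auto
      have "encode k n G (u i) \<noteq> encode k n G (u j)"
        using encode_inj[OF assms(2)] assms(4) i j ne by blast
      moreover have "encode k n G (u i) \<in> code k n G" "encode k n G (u j) \<in> code k n G"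
        using assms(4) i j by (auto simp: code_def)
      ultimately have "2 * td + 1 \<le> hamming (encode k n G (u i)) (encode k n G (u j))"
        using assms(3) by (auto simp: min_dist_ge_def)
      then have "Dmat k n G f tf u i j \<le> ?d" using True assms(1) by (simp add: Dmat_def)
      also have "\<dots> \<le> hamming (p i) (p j)" using p2 i j ij by force
      finally show ?thesis .
    qed (simp add: Dmat_def)
  qed
  then have "Nmat TYPE('a) M (Dmat k n G f tf u) \<le> (LEAST r. ?P r)"
    by (rule Nmat_le[OF p1])
  moreover have "(LEAST r. ?P r) = Nunif TYPE('a) M ?d" unfolding Nunif_def Nmat_def by (rule refl)
  ultimately show ?thesis by (rule ord_le_eq_trans)
qed

end
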